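(* Let $\sigma^2>0$, $\boldsymbol\beta\in\mathbb{R}^p$ not identically zero with $\beta_1\le\beta_2\le\cdots\le\beta_p$, $\delta_1^2,\dots,\delta_p^2>0$ with $\sum_{i=1}^p\beta_i/\delta_i^2\ge0$, and $\Sigma=\sigma^2\boldsymbol\beta\boldsymbol\beta^\top+\mathrm{diag}(\delta_1^2,\dots,\delta_p^2)$. Let $w$ be the long-only minimum variance portfolio (the minimizer of $w^\top\Sigma w$ subject to $\sum_i w_i=1$, $w_i\ge0$), $K=\{i:w_i>0\}$, $k=|K|$, and $C_K=\sum_{j\in K}\beta_j/\delta_j^2$. Then $K=\{1,2,\dots,k\}$ and $C_K\ge0$. *)

theory Defs
  imports Main "HOL-Analysis.Analysis"
begin

text \<open>Vectors in R^p and p x p matrices are represented as functions on the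
index set {1..p}. Covariance matrix Sigma = sigma^2 beta beta^T + diag(delta_1^2,...,delta_p^2).\<close>

definition one_factor_cov :: "real \<Rightarrow> (nat \<Rightarrow> real) \<Rightarrow> (nat \<Rightarrow> real) \<Rightarrow> nat \<Rightarrow> nat \<Rightarrow> real" where
  "one_factor_cov s2 \<beta> d2 i j = s2 * \<beta> i * \<beta> j + (if i = j then d2 i else 0)"

definition quad_form :: "nat \<Rightarrow> (nat \<Rightarrow> nat \<Rightarrow> real) \<Rightarrow> (nat \<Rightarrow> real) \<Rightarrow> real" where
  "quad_form p S w = (\<Sum>i=1..p. \<Sum>j=1..p. w i * S i j * w j)"

definition long_only :: "nat \<Rightarrow> (nat \<Rightarrow> real) \<Rightarrow> bool" where
  "long_only p w \<longleftrightarrow> (\<forall>i\<in>{1..p}. w i \<ge> 0) \<and> (\<Sum>i=1..p. w i) = 1"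

definition is_LO_minvar :: "nat \<Rightarrow> (nat \<Rightarrow> nat \<Rightarrow> real) \<Rightarrow> (nat \<Rightarrow> real) \<Rightarrow> bool" where
  "is_LO_minvar p S w \<longleftrightarrow> long_only p w \<and> (\<forall>v. long_only p v \<longrightarrow> quad_form p S w \<le> quad_form p S v)"

end

theory Submission
  imports Defs
begin

lemma quad_expand:
  "quad_form p (one_factor_cov s2 \<beta> d2) v
     = s2 * (\<Sum>i=1..p. \<beta> i * v i)^2 + (\<Sum>i=1..p. d2 i * (v i)^2)"
proof -
  have "quad_form p (one_factor_cov s2 \<beta> d2) v
     = (\<Sum>i=1..p. \<Sum>j=1..p. s2 * ((\<beta> i * v i) * (\<beta> j * v j)) + (if j = i then d2 i * (v i)^2 else 0))"
    unfolding quad_form_def one_factor_cov_def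
    by (intro sum.cong refl) (auto simp: algebra_simps power2_eq_square)
  also have "\<dots> = (\<Sum>i=1..p. s2 * ((\<beta> i * v i) * (\<Sum>j=1..p. \<beta> j * v j)) + d2 i * (v i)^2)"
    by (intro sum.cong refl) (simp add: sum.distrib sum_distrib_left)
  also have "\<dots> = s2 * ((\<Sum>i=1..p. \<beta> i * v i) * (\<Sum>j=1..p. \<beta> j * v j)) + (\<Sum>i=1..p. d2 i * (v i)^2)"
  proof -
    have "(\<Sum>i=1..p. s2 * ((\<beta> i * v i) * (\<Sum>j=1..p. \<beta> j * v j)))
        = s2 * (\<Sum>i=1..p. (\<beta> i * v i) * (\<Sum>j=1..p. \<beta> j * v j))"
      by (rule sum_distrib_left[symmetric])
    also have "\<dots> = s2 * ((\<Sum>i=1..p. \<beta> i * v i) * (\<Sum>j=1..p. \<beta> j * v j))"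
      by (simp only: sum_distrib_right[symmetric])
    finally show ?thesis by (simp only: sum.distrib)
  qed
  finally show ?thesis by (simp add: power2_eq_square)
qed

lemma delta_mult:
  fixes f :: "nat \<Rightarrow> real"
  assumes "j \<in> A" "finite A"
  shows "(\<Sum>k\<in>A. f k * (if k = j then 1 else 0)) = f j"
proof -
  have "(\<Sum>k\<in>A. f k * (if k = j then 1 else 0)) = (\<Sum>k\<in>A. if k = j then f k else 0)"
    by (intro sum.cong refl) simp
  thus ?thesis using assms by simp
qed

lemma small_t:
  fixes T L M :: real
  assumes "T > 0" "M \<ge> 0" "\<And>t. 0 < t \<Longrightarrow> t \<le> T \<Longrightarrow> 0 \<le> t * L + t^2 * M"
  shows "L \<ge> 0"
proof (rule ccontr)
  assume "\<not> L \<ge> 0"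
  hence L: "L < 0" by simp
  define t where "t = min T (-L/(2*M+1))"
  have "2*M+1 > 0" using assms by simp
  hence "-L/(2*M+1) > 0" using L by (simp add: divide_neg_pos)
  hence t0: "t > 0" using assms by (simp add: t_def)
  have "t \<le> T" by (simp add: t_def)
  have "t * M \<le> (-L/(2*M+1)) * M" unfolding t_def using assms by (intro mult_right_mono) auto
  also have "\<dots> \<le> -L/2" using L assms by (simp add: field_simps)
  finally have "L + t * M < 0" using L by simp
  hence "t * (L + t * M) < 0" using t0 by (simp add: mult_pos_neg)
  moreover have "0 \<le> t * L + t^2 * M" using assms(3) t0 \<open>t \<le> T\<close> by blast
  ultimately show False by (simp add: algebra_simps power2_eq_square)
qed

lemma perturb_sq:
  fixes d w u :: "nat \<Rightarrow> real" and t :: real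
  shows "(\<Sum>k\<in>A. d k * (w k + t * u k)^2) =
   (\<Sum>k\<in>A. d k * (w k)^2) + 2 * t * (\<Sum>k\<in>A. d k * w k * u k) + t^2 * (\<Sum>k\<in>A. d k * (u k)^2)"
proof -
  have "(\<Sum>k\<in>A. d k * (w k + t * u k)^2) =
    (\<Sum>k\<in>A. d k * (w k)^2 + 2 * t * (d k * w k * u k) + t^2 * (d k * (u k)^2))"
    by (intro sum.cong refl) (simp add: algebra_simps power2_eq_square)
  thus ?thesis by (simp add: sum.distrib sum_distrib_left)
qed

lemma prefix_card:
  fixes K :: "nat set"
  assumes "K \<subseteq> {1..p}" "\<And>i j. i \<in> K \<Longrightarrow> 1 \<le> j \<Longrightarrow> j \<le> i \<Longrightarrow> j \<in> K"
  shows "K = {1..card K}"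
proof (cases "K = {}")
  case True thus ?thesis by simp
next
  case False
  have fin: "finite K" using assms(1) finite_subset by blast
  define m where "m = Max K"
  have "m \<in> K" using fin False by (simp add: m_def)
  have "K = {1..m}"
  proof
    show "K \<subseteq> {1..m}" using assms(1) fin m_def by auto
    show "{1..m} \<subseteq> K" using assms(2) \<open>m \<in> K\<close> by auto
  qed
  thus ?thesis by simp
qed

theorem lemma2:
  fixes p :: nat and s2 :: real and \<beta> d2 w :: "nat \<Rightarrow> real"
  assumes "s2 > 0"
    and "\<exists>i\<in>{1..p}. \<beta> i \<noteq> 0"
    and "\<And>i j. 1 \<le> i \<Longrightarrow> i \<le> j \<Longrightarrow> j \<le> p \<Longrightarrow> \<beta> i \<le> \<beta> j"
    and "\<And>i. i \<in> {1..p} \<Longrightarrow> d2 i > 0"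
    and "(\<Sum>i=1..p. \<beta> i / d2 i) \<ge> 0"
    and "is_LO_minvar p (one_factor_cov s2 \<beta> d2) w"
  shows "{i\<in>{1..p}. w i > 0} = {1..card {i\<in>{1..p}. w i > 0}}
         \<and> (\<Sum>j\<in>{i\<in>{1..p}. w i > 0}. \<beta> j / d2 j) \<ge> 0"
proof -
  note s2 = assms(1) and mono = assms(3) and dpos = assms(4)
  have LO: "long_only p w" and opt: "\<And>v. long_only p v \<Longrightarrow>
      quad_form p (one_factor_cov s2 \<beta> d2) w \<le> quad_form p (one_factor_cov s2 \<beta> d2) v"
    using assms(6) unfolding is_LO_minvar_def by auto
  have wnn: "\<And>k. k \<in> {1..p} \<Longrightarrow> w k \<ge> 0" and wsum: "(\<Sum>k=1..p. w k) = 1"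
    using LO unfolding long_only_def by auto
  define K where "K = {i\<in>{1..p}. w i > 0}"
  define B where "B = (\<Sum>k=1..p. \<beta> k * w k)"
  define g where "g k = s2 * B * \<beta> k + d2 k * w k" for k
  have KKT: "g i \<le> g j" if i: "i \<in> {1..p}" "w i > 0" and j: "j \<in> {1..p}" for i j
  proof (cases "i = j")
    case True thus ?thesis by simp
  next
    case False
    define u where "u k = (if k = j then 1 else 0) - (if k = i then 1 else 0 :: real)" for k
    define a where "a = \<beta> j - \<beta> i"
    define c where "c = d2 j * w j - d2 i * w i"
    define D where "D = (\<Sum>k=1..p. d2 k * (u k)^2)"
    have D0: "D \<ge> 0" unfolding D_def using dpos by (intro sum_nonneg) (simp add: less_imp_le)
    have sb: "(\<Sum>k=1..p. \<beta> k * u k) = a"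
      using i j by (simp add: u_def a_def right_diff_distrib sum_subtractf delta_mult del: mult_if_delta)
    have sdu: "(\<Sum>k=1..p. d2 k * w k * u k) = c"
      using i j by (simp add: u_def c_def right_diff_distrib sum_subtractf delta_mult del: mult_if_delta)
    have su: "(\<Sum>k=1..p. u k) = 0"
      using i j by (simp add: u_def sum_subtractf)
    have "0 \<le> t * (2 * s2 * B * a + 2 * c) + t^2 * (s2 * a^2 + D)"
      if t: "0 < t" "t \<le> w i" for t
    proof -
      define v where "v k = w k + t * u k" for k
      have "long_only p v"
        unfolding long_only_def
      proof
        show "\<forall>k\<in>{1..p}. 0 \<le> v k"
          using wnn t False by (auto simp: v_def u_def)
        show "(\<Sum>k=1..p. v k) = 1"
          using wsum su by (simp add: v_def sum.distrib sum_distrib_left[symmetric])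
      qed
      hence "quad_form p (one_factor_cov s2 \<beta> d2) w \<le> quad_form p (one_factor_cov s2 \<beta> d2) v"
        by (rule opt)
      moreover have e1: "(\<Sum>k=1..p. \<beta> k * v k) = B + t * a"
        using sb by (simp add: v_def B_def algebra_simps sum.distrib sum_distrib_left[symmetric])
      moreover have e2: "(\<Sum>k=1..p. d2 k * (v k)^2) = (\<Sum>k=1..p. d2 k * (w k)^2) + 2 * t * c + t^2 * D"
        unfolding v_def D_def using perturb_sq[of d2 w t u "{1..p}"] sdu by simp
      moreover have "quad_form p (one_factor_cov s2 \<beta> d2) w = s2 * B^2 + (\<Sum>k=1..p. d2 k * (w k)^2)"
        by (simp only: quad_expand B_def)
      moreover have "quad_form p (one_factor_cov s2 \<beta> d2) v
          = s2 * (B + t * a)^2 + ((\<Sum>k=1..p. d2 k * (w k)^2) + 2 * t * c + t^2 * D)"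
        by (simp only: quad_expand e1 e2)
      moreover have "s2 * (B + t * a)^2 - s2 * B^2 = t * (2 * s2 * B * a) + t^2 * (s2 * a^2)"
        by (simp add: power2_eq_square algebra_simps)
      ultimately show ?thesis by (simp add: algebra_simps)
    qed
    moreover have M0: "s2 * a^2 + D \<ge> 0" using s2 D0 by simp
    ultimately have "2 * s2 * B * a + 2 * c \<ge> 0"
      using small_t[OF i(2) M0] by blast
    hence "s2 * B * (\<beta> j - \<beta> i) + (d2 j * w j - d2 i * w i) \<ge> 0"
      unfolding a_def c_def by (simp add: algebra_simps)
    thus ?thesis unfolding g_def by (simp add: right_diff_distrib)
  qed
  obtain i0 where i0: "i0 \<in> {1..p}" "w i0 > 0"
  proof (rule ccontr)
    assume "\<not> thesis"
    hence "\<forall>k\<in>{1..p}. w k = 0" using wnn that by (metis antisym not_le)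
    hence "(\<Sum>k=1..p. w k) = 0" by simp
    thus False using wsum by simp
  qed
  define \<mu> where "\<mu> = g i0"
  have gK: "g k = \<mu>" if "k \<in> {1..p}" "w k > 0" for k
    using KKT[OF that i0(1)] KKT[OF i0 that(1)] unfolding \<mu>_def by simp
  have notK: "w j = 0 \<and> \<mu> \<le> s2 * B * \<beta> j" if "j \<in> {1..p}" "j \<notin> K" for j
  proof -
    have "w j = 0" using that wnn[OF that(1)] unfolding K_def by auto
    moreover have "\<mu> \<le> g j" unfolding \<mu>_def using KKT[OF i0 that(1)] .
    ultimately show ?thesis by (simp add: g_def)
  qed
  have "(\<Sum>k=1..p. w k * g k) = (\<Sum>k=1..p. w k * \<mu>)"
  proof (intro sum.cong refl)
    fix k assume k: "k \<in> {1..p}"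
    show "w k * g k = w k * \<mu>"
    proof (cases "w k > 0")
      case True thus ?thesis using gK[OF k] by simp
    next
      case False thus ?thesis using wnn[OF k] by simp
    qed
  qed
  also have "\<dots> = \<mu>" using wsum by (simp add: sum_distrib_right[symmetric])
  finally have mu_eq: "(\<Sum>k=1..p. w k * g k) = \<mu>" .
  have "(\<Sum>k=1..p. w k * g k) = s2 * B * B + (\<Sum>k=1..p. d2 k * (w k)^2)"
  proof -
    have "(\<Sum>k=1..p. w k * g k) = (\<Sum>k=1..p. (s2 * B) * (\<beta> k * w k) + d2 k * (w k)^2)"
      by (intro sum.cong refl) (simp add: g_def algebra_simps power2_eq_square)
    also have "\<dots> = (s2 * B) * (\<Sum>k=1..p. \<beta> k * w k) + (\<Sum>k=1..p. d2 k * (w k)^2)"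
      by (simp only: sum.distrib sum_distrib_left)
    finally show ?thesis unfolding B_def[symmetric] by simp
  qed
  moreover have "(\<Sum>k=1..p. d2 k * (w k)^2) > 0"
    using i0 dpos by (intro sum_pos2[of "{1..p}" i0]) (auto simp: less_imp_le)
  moreover have "s2 * B * B \<ge> 0" using s2 by (simp add: mult.assoc)
  ultimately have mu0: "\<mu> > 0" using mu_eq by linarith
  define C where "C = (\<Sum>k\<in>K. \<beta> k / d2 k)"
  define S2 where "S2 = (\<Sum>k\<in>K. \<beta> k ^ 2 / d2 k)"
  have KS: "K \<subseteq> {1..p}" unfolding K_def by auto
  have S20: "S2 \<ge> 0" unfolding S2_def using KS dpos
    by (intro sum_nonneg) (auto simp: less_imp_le)
  have "B = (\<Sum>k\<in>K. \<beta> k * w k)"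
    unfolding B_def using KS notK by (intro sum.mono_neutral_right) auto
  also have "\<dots> = (\<Sum>k\<in>K. \<mu> * (\<beta> k / d2 k) - s2 * B * (\<beta> k ^ 2 / d2 k))"
  proof (intro sum.cong refl)
    fix k assume k: "k \<in> K"
    hence "k \<in> {1..p}" "w k > 0" unfolding K_def by auto
    hence e: "\<mu> = s2 * B * \<beta> k + d2 k * w k" and dk: "d2 k > 0"
      using gK dpos by (auto simp: g_def)
    show "\<beta> k * w k = \<mu> * (\<beta> k / d2 k) - s2 * B * (\<beta> k ^ 2 / d2 k)"
      using dk unfolding e by (simp add: field_simps power2_eq_square)
  qed
  also have "\<dots> = \<mu> * C - s2 * B * S2"
    unfolding C_def S2_def by (simp add: sum_subtractf sum_distrib_left)
  finally have E: "\<mu> * C = B + s2 * B * S2" by simp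
  have split: "(\<Sum>i=1..p. \<beta> i / d2 i) = (\<Sum>i\<in>{1..p} - K. \<beta> i / d2 i) + C"
    unfolding C_def using KS by (simp add: sum.subset_diff)
  have B0: "B \<ge> 0"
  proof (rule ccontr)
    assume "\<not> B \<ge> 0"
    hence sB: "s2 * B < 0" using s2 by (simp add: mult_pos_neg)
    have "(\<Sum>i\<in>{1..p} - K. \<beta> i / d2 i) \<le> 0"
    proof (intro sum_nonpos)
      fix j assume j: "j \<in> {1..p} - K"
      hence "s2 * B * \<beta> j > 0" using notK[of j] mu0 by auto
      hence "\<beta> j < 0" using sB by (metis linorder_not_less mult_nonpos_nonneg less_imp_le)
      thus "\<beta> j / d2 j \<le> 0" using dpos[of j] j by (simp add: divide_nonpos_pos)
    qed
    hence "C \<ge> 0" using split assms(5) by linarith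
    hence "\<mu> * C \<ge> 0" using mu0 by simp
    moreover have "s2 * B * S2 \<le> 0" using sB S20 by (simp add: mult_nonpos_nonneg)
    ultimately have "B \<ge> 0" using E by linarith
    thus False using \<open>\<not> B \<ge> 0\<close> by simp
  qed
  have sB0: "s2 * B \<ge> 0" using B0 s2 by simp
  have C0: "C \<ge> 0"
  proof -
    have "\<mu> * C \<ge> 0" using E B0 sB0 S20 by simp
    thus ?thesis using mu0 by (simp add: zero_le_mult_iff)
  qed
  have pre: "j \<in> K" if "i \<in> K" "1 \<le> j" "j \<le> i" for i j
  proof (rule ccontr)
    assume nj: "j \<notin> K"
    have i: "i \<in> {1..p}" "w i > 0" using that(1) unfolding K_def by auto
    have j: "j \<in> {1..p}" using i that by auto
    have "\<mu> \<le> s2 * B * \<beta> j" using notK[OF j nj] by simp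
    also have "\<dots> \<le> s2 * B * \<beta> i"
      using sB0 mono[of j i] that i by (intro mult_left_mono) auto
    also have "\<dots> < g i" using dpos[OF i(1)] i(2) by (simp add: g_def)
    also have "\<dots> = \<mu>" using gK i by simp
    finally show False by simp
  qed
  have "K = {1..card K}" by (rule prefix_card[OF KS]) (rule pre)
  thus ?thesis using C0 unfolding K_def C_def by simp
qed

end
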